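(* Let $p$ be a prime and $a,b,c\ge0$ integers with $a,b\le p-1$ and $c\le a+b$. Then every root of $f(a,b,c)$ in $\overline{\mathbb{F}}_p\setminus\{0,1\}$ is a simple root.
   Context: For non-negative integers $a,b,c$, $f(a,b,c)\in\overline{\mathbb{F}}_p[t]$ is $f(a,b,c)=\sum_{i_2+i_3=c}\binom{a}{i_2}\binom{b}{i_3}t^{i_2}$ (binomial coefficients reduced mod $p$, $\binom{n}{i}=0$ for $i<0$ or $i>n$). *)

theory Defs
  imports "HOL-Computational_Algebra.Computational_Algebra"
begin

definition fpoly :: "nat \<Rightarrow> nat \<Rightarrow> nat \<Rightarrow> 'k::field poly" where
  "fpoly a b c = (\<Sum>i\<in>{0..c}. monom (of_nat ((a choose i) * (b choose (c - i)))) i)"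

end

theory Submission
  imports Defs
begin

lemma coeff_fpoly:
  "coeff (fpoly a b c :: 'k::field poly) n =
     (if n \<le> c then of_nat ((a choose n) * (b choose (c - n))) else 0)"
  unfolding fpoly_def by (auto simp: coeff_sum coeff_monom)

lemma binom_id: "(k+1) * (m choose (k+1)) = (m-k) * (m choose k)"
proof (cases "k < m")
  case True
  then show ?thesis
    by (metis Suc_eq_plus1 binomial_absorb_comp binomial_absorption mult.commute)
next
  case False
  then show ?thesis by simp
qed

lemma binom_id_int: "int (k+1) * int (m choose (k+1)) = (int m - int k) * int (m choose k)"
proof (cases "k \<le> m")
  case True
  then have "int ((k+1) * (m choose (k+1))) = int ((m-k) * (m choose k))"
    using binom_id by metis
  then show ?thesis using True by (simp add: of_nat_diff algebra_simps)
next
  case False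
  then show ?thesis by (simp add: binomial_eq_0)
qed

definition uu :: "nat \<Rightarrow> nat \<Rightarrow> nat \<Rightarrow> nat \<Rightarrow> int" where
  "uu a b c n = (if n \<le> c then int ((a choose n) * (b choose (c - n))) else 0)"

lemma uu_rec:
  "int (n+1) * (int n + 1 + int b - int c) * uu a b c (n+1)
     = (int a - int n) * (int c - int n) * uu a b c n"
proof (cases "n < c")
  case True
  define k where "k = c - n - 1"
  have ck: "c - n = k + 1" "c - (n+1) = k" "c - Suc n = k" using True k_def by auto
  have e1: "int (n+1) * int (a choose (n+1)) = (int a - int n) * int (a choose n)"
    by (rule binom_id_int)
  have e2: "(int b - int k) * int (b choose k) = int (k+1) * int (b choose (k+1))"
    using binom_id_int[of k b] by simp
  have kk: "int n + 1 + int b - int c = int b - int k" "int c - int n = int (k+1)"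
    using True k_def by auto
  have "int (n+1) * (int n + 1 + int b - int c) * uu a b c (n+1)
      = (int (n+1) * int (a choose (n+1))) * ((int b - int k) * int (b choose k))"
    using True unfolding uu_def kk by (simp add: ck)
  also have "\<dots> = ((int a - int n) * int (a choose n)) * (int (k+1) * int (b choose (k+1)))"
    using e1 e2 by simp
  also have "\<dots> = (int a - int n) * (int c - int n) * uu a b c n"
    using True unfolding uu_def kk by (simp add: ck)
  finally show ?thesis .
next
  case False
  then show ?thesis by (cases "n = c") (auto simp: uu_def)
qed

lemma coeff_fpoly_uu: "coeff (fpoly a b c :: 'k::field poly) n = of_int (uu a b c n)"
  by (simp add: coeff_fpoly uu_def)

lemma recF:
  "(of_nat (n+1) * (of_nat n + 1 + of_nat b - of_nat c) * coeff (fpoly a b c) (n+1)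
     :: 'k::field)
   = (of_nat a - of_nat n) * (of_nat c - of_nat n) * coeff (fpoly a b c) n"
proof -
  have "(of_int (int (n+1) * (int n + 1 + int b - int c) * uu a b c (n+1)) :: 'k)
     = of_int ((int a - int n) * (int c - int n) * uu a b c n)"
    using uu_rec by metis
  then show ?thesis by (simp add: coeff_fpoly_uu)
qed

lemma tf': "coeff (pCons 0 (pderiv f)) n = (of_nat n :: 'k::field) * coeff f n"
  by (cases n) (simp_all add: coeff_pderiv)

lemma tf'': "coeff (pCons 0 (pderiv (pderiv f))) n
   = (of_nat n :: 'k::field) * of_nat (n+1) * coeff f (n+1)"
  by (cases n) (simp_all add: coeff_pderiv)

lemma t2f'': "coeff (pCons 0 (pCons 0 (pderiv (pderiv f)))) n
   = (of_nat n :: 'k::field) * (of_nat n - 1) * coeff f n"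
proof (cases n)
  case 0 then show ?thesis by simp
next
  case (Suc m)
  then show ?thesis using tf''[of f m] by (simp add: algebra_simps)
qed

lemma ode:
  fixes a b c :: nat
  defines "f \<equiv> (fpoly a b c :: 'k::field poly)"
  shows "pCons 0 (pderiv (pderiv f)) - pCons 0 (pCons 0 (pderiv (pderiv f)))
     + smult (1 + of_nat b - of_nat c) (pderiv f)
     + pCons 0 (smult (of_nat a + of_nat c - 1) (pderiv f))
     - smult (of_nat a * of_nat c) f = 0"
proof (rule poly_eqI)
  fix n
  have s: "coeff (pCons 0 (smult (of_nat a + of_nat c - 1) (pderiv f))) n
      = (of_nat a + of_nat c - 1) * coeff (pCons 0 (pderiv f)) n"
    by (cases n) simp_all
  have "coeff (pCons 0 (pderiv (pderiv f)) - pCons 0 (pCons 0 (pderiv (pderiv f)))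
     + smult (1 + of_nat b - of_nat c) (pderiv f)
     + pCons 0 (smult (of_nat a + of_nat c - 1) (pderiv f))
     - smult (of_nat a * of_nat c) f) n
    = of_nat (n+1) * (of_nat n + 1 + of_nat b - of_nat c) * coeff f (n+1)
      - (of_nat a - of_nat n) * (of_nat c - of_nat n) * coeff f n"
    unfolding coeff_diff coeff_add coeff_smult s tf' tf'' t2f'' coeff_pderiv
    by (simp add: algebra_simps)
  also have "\<dots> = 0" unfolding f_def using recF[of n b c a] by simp
  finally show "coeff (pCons 0 (pderiv (pderiv f)) - pCons 0 (pCons 0 (pderiv (pderiv f)))
     + smult (1 + of_nat b - of_nat c) (pderiv f)
     + pCons 0 (smult (of_nat a + of_nat c - 1) (pderiv f))
     - smult (of_nat a * of_nat c) f) n = coeff 0 n" by simp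
qed

lemma not_dvd_fact: "prime (p::nat) \<Longrightarrow> a < p \<Longrightarrow> \<not> p dvd fact a"
proof (induction a)
  case 0 then show ?case using prime_gt_1_nat by fastforce
next
  case (Suc a)
  show ?case
  proof
    assume "p dvd fact (Suc a)"
    then have "p dvd Suc a * fact a" by (simp add: fact_Suc)
    then have "p dvd Suc a \<or> p dvd fact a" using Suc.prems(1) prime_dvd_mult_iff by blast
    moreover have "\<not> p dvd Suc a" using Suc.prems(2) nat_dvd_not_less by blast
    moreover have "\<not> p dvd fact a" using Suc.IH Suc.prems by simp
    ultimately show False by blast
  qed
qed

lemma not_dvd_binom: "prime (p::nat) \<Longrightarrow> a < p \<Longrightarrow> i \<le> a \<Longrightarrow> \<not> p dvd (a choose i)"
  using binomial_fact_lemma[of i a] not_dvd_fact[of p a]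
  by (metis dvd_mult)

lemma pderiv_g:
  fixes q :: "'k::field poly"
  shows "pderiv ([:-x,1:]^Suc n * q)
     = [:-x,1:]^n * (smult (of_nat (Suc n)) q + [:-x,1:] * pderiv q)"
proof -
  have "pderiv [:-x,1:] = (1::'k poly)" by (simp add: pderiv_pCons)
  then have "pderiv ([:-x,1:]^Suc n * q) = [:-x,1:]^Suc n * pderiv q + q * smult (of_nat (Suc n)) ([:-x,1:]^n)"
    by (simp only: pderiv_mult pderiv_power_Suc mult_1_right)
  then show ?thesis by (simp add: algebra_simps)
qed

lemma polyT: "[:0,1,-1:] * F = pCons 0 F - pCons (0::'k::field) (pCons 0 F)"
  by (rule poly_eqI) (simp add: coeff_pCons split: nat.split)

lemma ode2:
  fixes a b c :: nat
  defines "f \<equiv> (fpoly a b c :: 'k::field poly)"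
  shows "[:0,1,-1:] * pderiv (pderiv f)
     + [:1 + of_nat b - of_nat c, of_nat a + of_nat c - 1:] * pderiv f
     - [:of_nat a * of_nat c:] * f = 0"
proof -
  have "[:0,1,-1:] * pderiv (pderiv f)
     + [:1 + of_nat b - of_nat c, of_nat a + of_nat c - 1:] * pderiv f
     - [:of_nat a * of_nat c:] * f
   = pCons 0 (pderiv (pderiv f)) - pCons 0 (pCons 0 (pderiv (pderiv f)))
     + smult (1 + of_nat b - of_nat c) (pderiv f)
     + pCons 0 (smult (of_nat a + of_nat c - 1) (pderiv f))
     - smult (of_nat a * of_nat c) f"
    unfolding polyT by (simp del: mult_pCons_left add: algebra_simps)
  also have "\<dots> = 0" unfolding f_def by (rule ode)
  finally show ?thesis .
qed

theorem propositionA6: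
  fixes p a b c :: nat and x :: "'k::alg_closed_field"
  assumes "prime p" and "CHAR('k) = p"
    and "a \<le> p - 1" and "b \<le> p - 1" and "c \<le> a + b"
    and "x \<noteq> 0" and "x \<noteq> 1" and "poly (fpoly a b c) x = 0"
  shows "order x (fpoly a b c) = 1"
proof -
  define f where "f = (fpoly a b c :: 'k poly)"
  have p1: "p > 1" using assms(1) prime_gt_1_nat by blast
  have ap: "a < p" "b < p" using assms(3,4) p1 by linarith+
  define i where "i = min a c"
  have ia: "i \<le> a" and ib: "c - i \<le> b" and ic: "i \<le> c" using assms(5) unfolding i_def by auto
  have "coeff f i \<noteq> 0"
  proof
    assume "coeff f i = 0"
    then have "of_nat ((a choose i) * (b choose (c - i))) = (0::'k)"
      unfolding f_def coeff_fpoly using ic by simp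
    then have "p dvd (a choose i) * (b choose (c - i))"
      using assms(2) of_nat_eq_0_iff_char_dvd by metis
    then have "p dvd (a choose i) \<or> p dvd (b choose (c - i))"
      using assms(1) prime_dvd_mult_iff by blast
    then show False
      using not_dvd_binom[OF assms(1) ap(1) ia] not_dvd_binom[OF assms(1) ap(2) ib] by blast
  qed
  then have f0: "f \<noteq> 0" by auto
  have degf: "degree f \<le> a"
  proof (rule degree_le)
    show "\<forall>j>a. coeff f j = 0" unfolding f_def coeff_fpoly by (simp add: binomial_eq_0)
  qed
  define m where "m = order x f"
  have m1: "m \<noteq> 0" using assms(8) f0 order_root unfolding m_def f_def by blast
  have mp: "m < p" using order_degree[OF f0, of x] degf ap unfolding m_def by linarith
  show ?thesis
  proof (rule ccontr)
    assume "order x (fpoly a b c) \<noteq> 1"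
    then have "m \<noteq> 1" unfolding m_def f_def .
    then obtain k where mk: "m = Suc (Suc k)" using m1
      by (metis not0_implies_Suc One_nat_def)
    define g where "g = [:-x, 1:]"
    obtain q where fq: "f = g^m * q" and nq: "\<not> g dvd q"
      using order_decomp[OF f0, of x] unfolding g_def m_def by blast
    have qx: "poly q x \<noteq> 0" using nq unfolding g_def by (simp add: poly_eq_0_iff_dvd)
    define r1 where "r1 = smult (of_nat (Suc (Suc k))) q + g * pderiv q"
    have d1: "pderiv f = g^Suc k * r1" unfolding fq mk r1_def g_def by (rule pderiv_g)
    define r2 where "r2 = smult (of_nat (Suc k)) r1 + g * pderiv r1"
    have d2: "pderiv (pderiv f) = g^k * r2" unfolding d1 r2_def g_def by (rule pderiv_g)
    define T where "T = [:0, 1, -1::'k:]"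
    define A where "A = [:1 + of_nat b - of_nat c, of_nat a + of_nat c - 1::'k:]"
    define C where "C = [:of_nat a * of_nat c::'k:]"
    have "T * pderiv (pderiv f) + A * pderiv f - C * f = 0"
      using ode2[of a b c] unfolding f_def T_def A_def C_def .
    moreover have "T * pderiv (pderiv f) + A * pderiv f - C * f
        = g^k * (T * r2 + A * g * r1 - C * g * g * q)"
      by (subst d2, subst d1, subst fq) (simp add: mk power_Suc algebra_simps)
    ultimately have "g^k * (T * r2 + A * g * r1 - C * g * g * q) = 0" by simp
    then have E: "T * r2 + A * g * r1 - C * g * g * q = 0"
      unfolding g_def by simp
    have gx: "poly g x = 0" unfolding g_def by simp
    have pr1: "poly r1 x = of_nat (Suc (Suc k)) * poly q x" unfolding r1_def by (simp add: gx)
    have pr2: "poly r2 x = of_nat (Suc k) * poly r1 x" unfolding r2_def by (simp add: gx)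
    have pT: "poly T x = x * (1 - x)" unfolding T_def by (simp add: algebra_simps)
    have "poly (T * r2 + A * g * r1 - C * g * g * q) x = poly T x * poly r2 x"
      by (simp add: gx)
    then have "(x * (1 - x)) * (of_nat (Suc k) * (of_nat (Suc (Suc k)) * poly q x)) = 0"
      using E pT pr1 pr2 by simp
    moreover have "x * (1 - x) \<noteq> 0" using assms(6,7) by simp
    moreover have "of_nat (Suc k) \<noteq> (0::'k)" "of_nat (Suc (Suc k)) \<noteq> (0::'k)"
    proof -
      have "\<not> p dvd Suc k" "\<not> p dvd Suc (Suc k)" using mp mk nat_dvd_not_less by auto
      then show "of_nat (Suc k) \<noteq> (0::'k)" "of_nat (Suc (Suc k)) \<noteq> (0::'k)"
        using assms(2) of_nat_eq_0_iff_char_dvd by metis+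
    qed
    ultimately show False using qx by simp
  qed
qed

end
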